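(* Let $(P_n)_{n\in\mathbb{Z}}$ be the Padovan sequence. For every $a\in\mathbb{Z}$ let $\rho_a=3P_{a-2}-P_{a-4}$ and $\sigma_a=-\rho_{-a}$. Then for all integers $a,n$ with $a<n$, $$P_n=\rho_a P_{n-a}+\sigma_a P_{n-2a}+P_{n-3a}.$$
   Context: The Padovan sequence is defined by $P_0=P_1=P_2=1$ and $P_{n+3}=P_{n+1}+P_n$, extended to negative indices via $P_n=P_{n+3}-P_{n+1}$. *)

theory Defs
  imports Main
begin

function padovan :: "int \<Rightarrow> int" where
  "padovan n = (if n = 0 \<or> n = 1 \<or> n = 2 then 1
                else if n \<ge> 3 then padovan (n - 2) + padovan (n - 3)
                else padovan (n + 3) - padovan (n + 1))"
  by auto
termination
  by (relation "measure (\<lambda>n. if n \<ge> 0 then nat n else nat (3 - 2 * n))") auto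

declare padovan.simps [simp del]

definition rho :: "int \<Rightarrow> int" where
  "rho a = 3 * padovan (a - 2) - padovan (a - 4)"

definition sigma :: "int \<Rightarrow> int" where
  "sigma a = - rho (- a)"

end

theory Submission
  imports Defs
begin

lemma prec: "padovan (k+3) = padovan (k+1) + padovan k"
proof -
  consider "k \<ge> 0" | "k = -1" | "k = -2" | "k = -3" | "k < -3" by linarith
  then show ?thesis
  proof cases
    case 1 then show ?thesis by (subst padovan.simps) (simp add: add.commute)
  next
    case 2 then show ?thesis by (simp add: padovan.simps)
  next
    case 3 then show ?thesis by (simp add: padovan.simps)
  next
    case 4 then show ?thesis by (simp add: padovan.simps)
  next
    case 5
    have "padovan k = padovan (k+3) - padovan (k+1)"
      using 5 by (subst padovan.simps) simp
    then show ?thesis by simp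
  qed
qed

lemma rec_zero:
  fixes f :: "int \<Rightarrow> int"
  assumes r: "\<And>k. f (k+3) = f (k+1) + f k" and z: "f 0 = 0" "f 1 = 0" "f 2 = 0"
  shows "f k = 0"
proof -
  have up: "f (int j) = 0 \<and> f (int j + 1) = 0 \<and> f (int j + 2) = 0" for j
  proof (induction j)
    case 0 then show ?case using z by simp
  next
    case (Suc j)
    have "f (int j + 3) = 0" using r[of "int j"] Suc by simp
    then show ?case using Suc by (simp add: add.commute add.left_commute)
  qed
  have down: "f (- int j) = 0 \<and> f (- int j + 1) = 0 \<and> f (- int j + 2) = 0" for j
  proof (induction j)
    case 0 then show ?case using z by simp
  next
    case (Suc j)
    have "f (-1 - int j) = 0" using r[of "-1 - int j"] Suc by (simp add: algebra_simps)
    then show ?case using Suc by (simp add: algebra_simps)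
  qed
  show ?thesis
  proof (cases "k \<ge> 0")
    case True then show ?thesis using up[of "nat k"] by simp
  next
    case False then show ?thesis using down[of "nat (-k)"] by simp
  qed
qed

lemma pv: "padovan 0 = 1" "padovan 1 = 1" "padovan 2 = 1"
  "padovan (-1) = 0" "padovan (-2) = 1" "padovan (-3) = 0" "padovan (-4) = 0"
  "padovan (-5) = 1" "padovan (-6) = -1" "padovan (-7) = 1" "padovan 3 = 2" "padovan 4 = 2"
  by (simp_all add: padovan.simps)

lemma shiftA: "padovan (n+a) = padovan (a-5) * padovan n + padovan (a-3) * padovan (n+1) + padovan (a-4) * padovan (n+2)"
proof -
  define f where "f a = padovan (n+a) - (padovan (a-5) * padovan n + padovan (a-3) * padovan (n+1) + padovan (a-4) * padovan (n+2))" for a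
  have "f a = 0"
  proof (rule rec_zero[of f])
    fix k
    have "padovan (n+(k+3)) = padovan (n+(k+1)) + padovan (n+k)" using prec[of "n+k"] by (simp add: algebra_simps)
    moreover have "padovan (k+3-5) = padovan (k+1-5) + padovan (k-5)" using prec[of "k-5"] by (simp add: algebra_simps)
    moreover have "padovan (k+3-3) = padovan (k+1-3) + padovan (k-3)" using prec[of "k-3"] by (simp add: algebra_simps)
    moreover have "padovan (k+3-4) = padovan (k+1-4) + padovan (k-4)" using prec[of "k-4"] by (simp add: algebra_simps)
    ultimately show "f (k+3) = f (k+1) + f k" unfolding f_def by (simp add: algebra_simps)
  qed (simp_all add: f_def pv)
  then show ?thesis by (simp add: f_def)
qed

lemma row1: "padovan (x+1+a) = padovan (a-4) * padovan x + (padovan (a-5) + padovan (a-4)) * padovan (x+1) + padovan (a-3) * padovan (x+2)"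
proof -
  have "padovan (x+1+a) = padovan (a-5) * padovan (x+1) + padovan (a-3) * padovan (x+1+1) + padovan (a-4) * padovan (x+1+2)"
    by (rule shiftA)
  moreover have "padovan (x+1+2) = padovan (x+1) + padovan x" using prec[of x] by (simp add: algebra_simps)
  ultimately show ?thesis by (simp add: algebra_simps)
qed

lemma row2: "padovan (x+2+a) = padovan (a-3) * padovan x + (padovan (a-3) + padovan (a-4)) * padovan (x+1) + (padovan (a-5) + padovan (a-4)) * padovan (x+2)"
proof -
  have "padovan (x+2+a) = padovan (a-5) * padovan (x+2) + padovan (a-3) * padovan (x+2+1) + padovan (a-4) * padovan (x+2+2)"
    by (rule shiftA)
  moreover have "padovan (x+2+1) = padovan (x+1) + padovan x" using prec[of x] by (simp add: algebra_simps)
  moreover have "padovan (x+2+2) = padovan (x+2) + padovan (x+1)" using prec[of "x+1"] by (simp add: algebra_simps)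
  ultimately show ?thesis by (simp add: algebra_simps)
qed

definition dN :: "int \<Rightarrow> int \<Rightarrow> int \<Rightarrow> int" where
  "dN u v w = u * ((u+w)*(u+w) - v*(v+w)) - v * (w*(u+w) - v*v) + w * (w*(v+w) - (u+w)*v)"

definition eN :: "int \<Rightarrow> int \<Rightarrow> int \<Rightarrow> int" where
  "eN u v w = (u*(u+w) - v*w) + (u*(u+w) - w*v) + ((u+w)*(u+w) - v*(v+w))"

lemma dN_shift: "dN w (u+w) v = dN u v w"
  unfolding dN_def by algebra

lemma eN_shift: "eN (v-w) (v-u) (w-v+u) = eN (v-u) w u + eN u v w"
  unfolding eN_def by algebra

lemma det1: "dN (padovan (a-5)) (padovan (a-3)) (padovan (a-4)) = 1"
proof (induction a rule: int_induct[where k=0])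
  case base then show ?case by (simp add: pv dN_def)
next
  case (step1 i)
  have "padovan (i+1-5) = padovan (i-4)" "padovan (i+1-4) = padovan (i-3)" by simp_all
  moreover have "padovan (i+1-3) = padovan (i-5) + padovan (i-4)" using prec[of "i-5"] by (simp add: algebra_simps)
  ultimately show ?case using step1 dN_shift by simp
next
  case (step2 i)
  have "padovan (i-4) = padovan (i-1-3)" "padovan (i-3) = padovan (i-1-2)" by simp_all
  moreover have "padovan (i-1-2) = padovan (i-1-5) + padovan (i-1-4)" using prec[of "i-1-5"] by (simp add: algebra_simps)
  ultimately have "dN (padovan (i-5)) (padovan (i-3)) (padovan (i-4)) = dN (padovan (i-1-4)) (padovan (i-1-5) + padovan (i-1-4)) (padovan (i-1-3))"
    by simp
  also have "\<dots> = dN (padovan (i-1-5)) (padovan (i-1-3)) (padovan (i-1-4))" by (rule dN_shift)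
  finally show ?case using step2 by simp
qed

lemma e_rho: "eN (padovan (a-5)) (padovan (a-3)) (padovan (a-4)) = rho (-a)"
proof -
  define h where "h k = eN (padovan (-k-5)) (padovan (-k-3)) (padovan (-k-4)) - rho k" for k
  have "h k = 0" for k
  proof (rule rec_zero[of h])
    fix k
    define u v w where "u = padovan (-k-5)" "v = padovan (-k-3)" "w = padovan (-k-4)"
    have p6: "padovan (-k-6) = v - u" using prec[of "-k-6"] u_v_w_def by (simp add: algebra_simps)
    have p7: "padovan (-k-7) = w - v + u" using prec[of "-k-7"] u_v_w_def p6 by (simp add: algebra_simps)
    have p8: "padovan (-k-8) = v - w" using prec[of "-k-8"] u_v_w_def p7 by (simp add: algebra_simps)
    have r: "rho (k+3) = rho (k+1) + rho k"
      using prec[of "k-2"] prec[of "k-4"] unfolding rho_def by (simp add: algebra_simps)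
    have i3: "-(k+3)-5 = -k-8" "-(k+3)-3 = -k-6" "-(k+3)-4 = -k-7" by simp_all
    have e3: "eN (padovan (-(k+3)-5)) (padovan (-(k+3)-3)) (padovan (-(k+3)-4)) = eN (v-w) (v-u) (w-v+u)"
      unfolding i3 p6 p7 p8 by simp
    have i1: "-(k+1)-5 = -k-6" "-(k+1)-3 = -k-4" "-(k+1)-4 = -k-5" by simp_all
    have e1: "eN (padovan (-(k+1)-5)) (padovan (-(k+1)-3)) (padovan (-(k+1)-4)) = eN (v-u) w u"
      unfolding i1 p6 u_v_w_def by simp
    have e0: "eN (padovan (-k-5)) (padovan (-k-3)) (padovan (-k-4)) = eN u v w"
      using u_v_w_def by simp
    show "h (k+3) = h (k+1) + h k" unfolding h_def using e3 e1 e0 r eN_shift by simp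
  qed (simp_all add: h_def pv eN_def rho_def)
  from this[of "-a"] show ?thesis by (simp add: h_def)
qed

theorem theorem3p1:
  fixes a n :: int
  assumes "a < n"
  shows "padovan n = rho a * padovan (n - a) + sigma a * padovan (n - 2 * a) + padovan (n - 3 * a)"
proof -
  define m where "m = n - 3*a"
  define u v w where "u = padovan (a-5)" "v = padovan (a-3)" "w = padovan (a-4)"
  have R0: "padovan (x+a) = u * padovan x + v * padovan (x+1) + w * padovan (x+2)" for x
    unfolding u_v_w_def by (rule shiftA)
  have R1: "padovan (x+a+1) = w * padovan x + (u+w) * padovan (x+1) + v * padovan (x+2)" for x
    using row1[of x a] u_v_w_def by (simp add: algebra_simps)
  have R2: "padovan (x+a+2) = v * padovan x + (v+w) * padovan (x+1) + (u+w) * padovan (x+2)" for x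
    using row2[of x a] u_v_w_def by (simp add: algebra_simps)
  have rh: "rho a = 3*u + 2*w"
    using prec[of "a-5"] u_v_w_def unfolding rho_def by (simp add: algebra_simps)
  have sg: "sigma a = - eN u v w" using e_rho[of a] u_v_w_def sigma_def by simp
  have d: "dN u v w = 1" using det1[of a] u_v_w_def by simp
  have n: "n = m+a+a+a" "n - a = m+a+a" "n - 2*a = m + a" "n - 3*a = m" using m_def by simp_all
  define p0 p1 p2 where "p0 = padovan m" "p1 = padovan (m+1)" "p2 = padovan (m+2)"
  define q0 q1 q2 where "q0 = padovan (m+a)" "q1 = padovan (m+a+1)" "q2 = padovan (m+a+2)"
  define r0 r1 r2 where "r0 = padovan (m+a+a)" "r1 = padovan (m+a+a+1)" "r2 = padovan (m+a+a+2)"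
  have q: "q0 = u*p0 + v*p1 + w*p2" "q1 = w*p0 + (u+w)*p1 + v*p2" "q2 = v*p0 + (v+w)*p1 + (u+w)*p2"
    using R0[of m] R1[of m] R2[of m] p0_p1_p2_def q0_q1_q2_def by simp_all
  have r: "r0 = u*q0 + v*q1 + w*q2" "r1 = w*q0 + (u+w)*q1 + v*q2" "r2 = v*q0 + (v+w)*q1 + (u+w)*q2"
    using R0[of "m+a"] R1[of "m+a"] R2[of "m+a"] r0_r1_r2_def q0_q1_q2_def by (simp_all add: add.assoc)
  have s: "padovan n = u*r0 + v*r1 + w*r2"
  proof -
    have "padovan (m+a+a+a) = u*r0 + v*r1 + w*r2"
      using R0[of "m+a+a"] unfolding r0_r1_r2_def by (simp add: add.assoc)
    then show ?thesis using n(1) by simp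
  qed
  have key: "u*r0 + v*r1 + w*r2 = (3*u+2*w) * r0 - eN u v w * q0 + dN u v w * p0"
    unfolding r q eN_def dN_def by (simp add: algebra_simps)
  have fin: "padovan n = rho a * r0 + sigma a * q0 + p0" using s key rh sg d by simp
  show ?thesis unfolding n(2) n(3) n(4) using fin r0_r1_r2_def q0_q1_q2_def p0_p1_p2_def by simp
qed

end
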